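(* For every $\varepsilon\in(0,R)$, the approximate solution $u_\varepsilon$ satisfies $$u^*\ge u_\varepsilon\ge u^*-v\qquad\text{in }\Omega_\varepsilon\times(0,\infty).$$
   Context: Standing setting: $n\ge2$, $0<R<\sqrt{\tfrac38(3n-5)(2n-3)^3}$; $B_\rho=\{x\in\mathbb R^n:|x|<\rho\}$; radial functions written in $r=|x|$, subscript $r$ = radial derivative. $\alpha:=\sqrt[3]{9n-15}$, $u^*(r):=-\alpha r^{1/3}$, $\nu:=\tfrac16\sqrt{36n^2-96n+61}$, $J_\nu$ the Bessel function of the first kind of order $\nu$, $x_0,x_1$ the first positive roots of $J_\nu$, $J_\nu'$. $u_0$ satisfies: (C1) $u_0\in C^2(\overline{B_R}\setminus\{0\})$; (C2) radially symmetric; (C3) $u^*\ge u_0$; (C4) $\limsup_{r\searrow0}|r^{\frac32-n-\nu}(u^*(r)-u_0(r))|<\infty$; (C5) $u_0(R)=u^*(R)$; (C6) there is $C>0$ with $0\ge u_{0r}(r)\ge -Cr^{-2/3}$ on $(0,R)$. Fix $\lambda>0$ with $\lambda R<x_1$ and $C>0$ such that $v(r,t):=Ce^{-\lambda^2t}r^{n-\frac32}J_\nu(\lambda r)$ satisfies $u_0\ge u^*-v(\cdot,0)$ in $B_R$. For $\varepsilon\in(0,R)$ let $\Omega_\varepsilon:=B_R\setminus\overline{B_\varepsilon}$ and let $u_{0\varepsilon}\in C^2(\overline{\Omega_\varepsilon})$ be radially symmetric with: $u_{0\varepsilon}(\varepsilon)=u^*(\varepsilon)-v(\varepsilon,0)$;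 $u_{0r}\le u_{0\varepsilon r}\le0$; $u^*\ge u_{0\varepsilon}\ge u^*-v(\cdot,0)$; and $u_{0\varepsilon}=u_0$ on $\{r\in(\varepsilon,R]:u_0(r)<u^*(\varepsilon)-v(\varepsilon,0)-\varepsilon\}$. Let $c_v:=-e^{\lambda^2t}v(\varepsilon,t)$ (independent of $t$) and choose $c^*_\varepsilon>1$ with $c^*_\varepsilon>\sup_{[\varepsilon,R]}|u^*_r|$, $c^*_\varepsilon>\sup_{[\varepsilon,R]}|(u^*-v(\cdot,0))_r|$, $c^*_\varepsilon>\sup_{[\varepsilon,R]}|u_{0\varepsilon r}|$, and $c_v+\frac{n-1}{\varepsilon}c^*_\varepsilon+u^*(\varepsilon)(c^*_\varepsilon)^3\le0$. Let $f_\varepsilon\in C_c^\infty(\mathbb R)$ with $f_\varepsilon(s)=s^3$ for $|s|\le c^*_\varepsilon$ and $f_\varepsilon\le0$ on $(-\infty,0)$. The approximate solution $u_\varepsilon$ is the unique radially symmetric solution, with $u_\varepsilon\in C^{\beta,\beta/2}(\overline{\Omega_\varepsilon}\times[0,\infty))\cap C^{2+\beta,1+\beta/2}(\Omega_\varepsilon\times(0,\infty))$ for some $\beta\in(0,1)$ and $\nabla u_\varepsilon\in L^\infty_{loc}(\overline{\Omega_\varepsilon}\times[0,\infty))$, of $u_{\varepsilon t}=\Delta u_\varepsilon+u_\varepsilon f_\varepsilon(u_{\varepsilon r})$ in $\Omega_\varepsilon\times(0,\infty)$, $u_\varepsilon(\varepsilon,t)=u^*(\varepsilon)-v(\varepsilon,t)$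 and $u_\varepsilon(R,t)=u^*(R)$ for $t>0$, $u_\varepsilon(\cdot,0)=u_{0\varepsilon}$ in $\overline{\Omega_\varepsilon}$. *)

theory Defs
  imports "HOL-Analysis.Analysis"
begin

text \<open>Bessel function of the first kind of (real) order nu, via its power series
  (used for nonnegative arguments).\<close>
definition besselJ :: "real \<Rightarrow> real \<Rightarrow> real" where
  "besselJ \<nu> x = (\<Sum>m. (-1) ^ m / (fact m * Gamma (real m + \<nu> + 1))
                        * (x / 2) ^ (2 * m) * (x / 2) powr \<nu>)"

definition besselJ_deriv_first_root :: "real \<Rightarrow> real" where
  "besselJ_deriv_first_root \<nu> = Inf {x. 0 < x \<and> deriv (besselJ \<nu>) x = 0}"

definition alpha_const :: "nat \<Rightarrow> real" where
  "alpha_const n = root 3 (9 * real n - 15)"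

definition ustar :: "nat \<Rightarrow> real \<Rightarrow> real" where
  "ustar n r = - alpha_const n * r powr (1/3)"

definition nu_const :: "nat \<Rightarrow> real" where
  "nu_const n = sqrt (36 * (real n)^2 - 96 * real n + 61) / 6"

definition vfun :: "nat \<Rightarrow> real \<Rightarrow> real \<Rightarrow> real \<Rightarrow> real \<Rightarrow> real" where
  "vfun n C lam r t = C * exp (- (lam ^ 2) * t) * r powr (real n - 3/2) * besselJ (nu_const n) (lam * r)"

definition smooth_compact_support :: "(real \<Rightarrow> real) \<Rightarrow> bool" where
  "smooth_compact_support f \<longleftrightarrow>
     (\<exists>fs :: nat \<Rightarrow> real \<Rightarrow> real. fs 0 = f \<and>
        (\<forall>k x. (fs k has_real_derivative fs (Suc k) x) (at x)))
     \<and> compact (closure {s. f s \<noteq> 0})"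

end

theory Submission
  imports Defs
begin

definition bc :: "real \<Rightarrow> nat \<Rightarrow> real" where
  "bc \<nu> m = (-1) ^ m / (fact m * Gamma (real m + \<nu> + 1))"

definition PP :: "real \<Rightarrow> real \<Rightarrow> real" where
  "PP \<nu> y = (\<Sum>m. bc \<nu> m * y ^ m)"
definition PP1 :: "real \<Rightarrow> real \<Rightarrow> real" where
  "PP1 \<nu> y = (\<Sum>m. diffs (bc \<nu>) m * y ^ m)"
definition PP2 :: "real \<Rightarrow> real \<Rightarrow> real" where
  "PP2 \<nu> y = (\<Sum>m. diffs (diffs (bc \<nu>)) m * y ^ m)"

lemma bc_Suc:
  assumes "\<nu> > 0"
  shows "bc \<nu> (Suc m) = - bc \<nu> m / ((real m + 1) * (real m + \<nu> + 1))"
proof -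
  have "Gamma (real (Suc m) + \<nu> + 1) = (real m + \<nu> + 1) * Gamma (real m + \<nu> + 1)"
  proof -
    have "real (Suc m) + \<nu> + 1 = (real m + \<nu> + 1) + 1" by simp
    moreover have "(real m + \<nu> + 1) \<notin> \<int>\<^sub>\<le>\<^sub>0" using assms
      by (metis add_pos_pos nonpos_Ints_nonpos not_le of_nat_0_le_iff zero_less_one add_nonneg_pos)
    ultimately show ?thesis using Gamma_plus1 by metis
  qed
  moreover have "Gamma (real m + \<nu> + 1) > 0" using assms by (intro Gamma_real_pos) auto
  ultimately show ?thesis unfolding bc_def by (simp add: field_simps)
qed

lemma bc_summable:
  assumes "\<nu> > 0"
  shows "summable (\<lambda>m. bc \<nu> m * y ^ m)"
proof (rule summable_ratio_test[where c="1/2" and N="nat \<lceil>2 * \<bar>y\<bar>\<rceil>"])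
  fix m assume m: "m \<ge> nat \<lceil>2 * \<bar>y\<bar>\<rceil>"
  have m2: "real m \<ge> 2 * \<bar>y\<bar>" using m by linarith
  have den: "(real m + 1) * (real m + \<nu> + 1) \<ge> 2 * \<bar>y\<bar>"
  proof -
    have "real m + 1 \<le> (real m + 1) * (real m + \<nu> + 1)"
      using mult_left_mono[of 1 "real m+\<nu>+1" "real m+1"] assms by simp
    then show ?thesis using m2 by linarith
  qed
  have pos: "(real m + 1) * (real m + \<nu> + 1) > 0" using assms by (intro mult_pos_pos) auto
  have "norm (bc \<nu> (Suc m) * y ^ Suc m) = \<bar>bc \<nu> m\<bar> * \<bar>y\<bar>^m * (\<bar>y\<bar> / ((real m + 1) * (real m + \<nu> + 1)))"
    using pos by (simp add: bc_Suc[OF assms] abs_mult power_abs field_simps)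
  also have "\<dots> \<le> \<bar>bc \<nu> m\<bar> * \<bar>y\<bar>^m * (1/2)"
    using pos den by (intro mult_left_mono) (auto simp: field_simps)
  also have "\<dots> = 1/2 * norm (bc \<nu> m * y ^ m)" by (simp add: abs_mult power_abs)
  finally show "norm (bc \<nu> (Suc m) * y ^ Suc m) \<le> 1/2 * norm (bc \<nu> m * y ^ m)" .
qed simp

lemma PP_deriv:
  assumes "\<nu> > 0"
  shows "(PP \<nu> has_real_derivative PP1 \<nu> y) (at y)"
  unfolding PP_def PP1_def
  by (rule termdiffs_strong_converges_everywhere) (use bc_summable[OF assms] in auto)

lemma PP1_summable: "\<nu> > 0 \<Longrightarrow> summable (\<lambda>m. diffs (bc \<nu>) m * y ^ m)"
  by (rule termdiff_converges_all) (use bc_summable in auto)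

lemma PP2_summable: "\<nu> > 0 \<Longrightarrow> summable (\<lambda>m. diffs (diffs (bc \<nu>)) m * y ^ m)"
  by (rule termdiff_converges_all) (use PP1_summable in auto)

lemma PP1_deriv:
  assumes "\<nu> > 0"
  shows "(PP1 \<nu> has_real_derivative PP2 \<nu> y) (at y)"
  unfolding PP1_def PP2_def
  by (rule termdiffs_strong_converges_everywhere) (use PP1_summable[OF assms] in auto)

lemma PP_ode:
  assumes "\<nu> > 0"
  shows "y * PP2 \<nu> y + (\<nu> + 1) * PP1 \<nu> y + PP \<nu> y = 0"
proof -
  define g where "g k = real k * (real k + 1) * bc \<nu> (Suc k) * y ^ k" for k
  have "(\<lambda>m. y * (diffs (diffs (bc \<nu>)) m * y ^ m)) sums (y * PP2 \<nu> y)"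
    unfolding PP2_def by (intro sums_mult summable_sums PP2_summable assms)
  moreover have "(\<lambda>m. y * (diffs (diffs (bc \<nu>)) m * y ^ m)) = (\<lambda>m. g (Suc m))"
    by (auto simp: g_def diffs_def algebra_simps)
  ultimately have "(\<lambda>m. g (Suc m)) sums (y * PP2 \<nu> y)" by simp
  then have s1: "g sums (y * PP2 \<nu> y)" using sums_Suc_iff[of g "y * PP2 \<nu> y"] by (simp add: g_def)
  have s2: "(\<lambda>m. (\<nu> + 1) * (diffs (bc \<nu>) m * y ^ m)) sums ((\<nu> + 1) * PP1 \<nu> y)"
    unfolding PP1_def by (intro sums_mult summable_sums PP1_summable assms)
  have s3: "(\<lambda>m. bc \<nu> m * y ^ m) sums (PP \<nu> y)"
    unfolding PP_def by (intro summable_sums bc_summable assms)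
  have "(\<lambda>m. g m + (\<nu> + 1) * (diffs (bc \<nu>) m * y ^ m) + bc \<nu> m * y ^ m) sums
        (y * PP2 \<nu> y + (\<nu> + 1) * PP1 \<nu> y + PP \<nu> y)"
    by (intro sums_add s1 s2 s3)
  moreover have "(\<lambda>m. g m + (\<nu> + 1) * (diffs (bc \<nu>) m * y ^ m) + bc \<nu> m * y ^ m) = (\<lambda>m. 0)"
  proof
    fix m
    have pos: "(real m + 1) * (real m + \<nu> + 1) > 0" using assms by (intro mult_pos_pos) auto
    have e: "bc \<nu> (Suc m) * ((real m + 1) * (real m + \<nu> + 1)) = - bc \<nu> m"
      using pos assms unfolding bc_Suc[OF assms] by (simp add: add_pos_pos)
    have "g m + (\<nu> + 1) * (diffs (bc \<nu>) m * y ^ m) + bc \<nu> m * y ^ m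
        = y ^ m * (bc \<nu> (Suc m) * ((real m + 1) * (real m + \<nu> + 1)) + bc \<nu> m)"
      unfolding g_def diffs_def by (simp add: algebra_simps)
    then show "g m + (\<nu> + 1) * (diffs (bc \<nu>) m * y ^ m) + bc \<nu> m * y ^ m = 0"
      using e by simp
  qed
  ultimately show ?thesis using sums_unique2 sums_zero by metis
qed

definition hJ :: "real \<Rightarrow> real \<Rightarrow> real" where
  "hJ \<nu> x = PP \<nu> (x\<^sup>2/4) * (x/2) powr \<nu>"
definition hJd :: "real \<Rightarrow> real \<Rightarrow> real" where
  "hJd \<nu> x = PP1 \<nu> (x\<^sup>2/4) * (x/2) * (x/2) powr \<nu> + PP \<nu> (x\<^sup>2/4) * (\<nu> / 2 * (x/2) powr (\<nu> - 1))"

lemma besselJ_eq: 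
  assumes "\<nu> > 0"
  shows "besselJ \<nu> x = hJ \<nu> x"
proof -
  have "besselJ \<nu> x = (\<Sum>m. bc \<nu> m * (x\<^sup>2/4) ^ m * (x/2) powr \<nu>)"
    unfolding besselJ_def bc_def
    by (simp add: power_mult power_divide)
  also have "\<dots> = hJ \<nu> x"
    unfolding hJ_def PP_def by (rule suminf_mult2[symmetric]) (rule bc_summable[OF assms])
  finally show ?thesis .
qed

lemma hJ_deriv:
  assumes "\<nu> > 0" "x > 0"
  shows "(hJ \<nu> has_real_derivative hJd \<nu> x) (at x)"
proof -
  have d1: "((\<lambda>x. PP \<nu> (x\<^sup>2/4)) has_real_derivative PP1 \<nu> (x\<^sup>2/4) * (x/2)) (at x)"
  proof -
    have dd: "((\<lambda>x. x\<^sup>2/4) has_real_derivative x/2) (at x)"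
      by (auto intro!: derivative_eq_intros)
    show ?thesis using DERIV_chain2[OF PP_deriv[OF assms(1)] dd] by (simp add: field_simps)
  qed
  have d2: "((\<lambda>x. (x/2) powr \<nu>) has_real_derivative \<nu> / 2 * (x/2) powr (\<nu> - 1)) (at x)"
  proof -
    have dd: "((\<lambda>x. x/2) has_real_derivative 1/2) (at x)"
      by (auto intro!: derivative_eq_intros)
    have p: "((\<lambda>z. z powr \<nu>) has_real_derivative \<nu> * (x/2) powr (\<nu> - 1)) (at (x/2))"
      using has_real_derivative_powr[of "x/2" \<nu>] assms by simp
    show ?thesis using DERIV_chain2[OF p dd] by (simp add: field_simps)
  qed
  show ?thesis unfolding hJ_def hJd_def
    using DERIV_mult[OF d1 d2] by (simp add: algebra_simps)
qed

lemma besselJ_deriv: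
  assumes "\<nu> > 0" "x > 0"
  shows "(besselJ \<nu> has_real_derivative hJd \<nu> x) (at x)"
  by (rule has_field_derivative_transform_within_open[OF hJ_deriv[OF assms], of "{0<..}"])
     (use assms besselJ_eq[OF assms(1)] in auto)

lemma isCont_PP: "\<nu> > 0 \<Longrightarrow> isCont (PP \<nu>) y"
  using PP_deriv DERIV_isCont by blast
lemma isCont_PP1: "\<nu> > 0 \<Longrightarrow> isCont (PP1 \<nu>) y"
  using PP1_deriv DERIV_isCont by blast

lemma hJd_cont:
  assumes "\<nu> > 0" "x > 0"
  shows "isCont (hJd \<nu>) x"
proof -
  have c1: "isCont (\<lambda>x. PP \<nu> (x\<^sup>2/4)) x"
    by (rule isCont_o2[where g="PP \<nu>", OF _ isCont_PP[OF assms(1)]]) (intro continuous_intros; simp)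
  have c2: "isCont (\<lambda>x. PP1 \<nu> (x\<^sup>2/4)) x"
    by (rule isCont_o2[where g="PP1 \<nu>", OF _ isCont_PP1[OF assms(1)]]) (intro continuous_intros; simp)
  show ?thesis unfolding hJd_def using assms c1 c2
    by (intro continuous_intros) auto
qed

lemma hJ_cont0:
  assumes "\<nu> > 0"
  shows "continuous_on {0..} (hJ \<nu>)"
proof -
  have c1: "continuous_on {0..} (\<lambda>x. PP \<nu> (x\<^sup>2/4))"
    by (intro continuous_at_imp_continuous_on ballI isCont_o2[where g="PP \<nu>", OF _ isCont_PP[OF assms(1)]])
       (intro continuous_intros; simp)
  have c2: "continuous_on {0..} (\<lambda>x::real. (x/2) powr \<nu>)"
    by (rule continuous_on_powr') (use assms in \<open>auto intro!: continuous_intros\<close>)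
  show ?thesis unfolding hJ_def by (intro continuous_on_mult c1 c2)
qed

lemma hJ_0: "hJ \<nu> 0 = 0" by (simp add: hJ_def)

lemma hJd_pos:
  assumes nu: "\<nu> > 0" and a: "0 < a" "a \<le> b" and b: "b < besselJ_deriv_first_root \<nu>"
    and Ja: "besselJ \<nu> a \<ge> 0"
  shows "\<forall>x\<in>{0<..b}. hJd \<nu> x > 0"
proof -
  have nz: "hJd \<nu> x \<noteq> 0" if "0 < x" "x \<le> b" for x
  proof
    assume h0: "hJd \<nu> x = 0"
    have "deriv (besselJ \<nu>) x = 0" using besselJ_deriv[OF nu that(1)] h0 DERIV_imp_deriv by metis
    then have "x \<in> {x. 0 < x \<and> deriv (besselJ \<nu>) x = 0}" using that by auto
    then have "besselJ_deriv_first_root \<nu> \<le> x" unfolding besselJ_deriv_first_root_def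
      by (intro cInf_lower) (auto intro!: bdd_belowI[of _ 0])
    then show False using that b by linarith
  qed
  obtain l z where z: "0 < z" "z < a" "(hJ \<nu> has_real_derivative l) (at z)" "hJ \<nu> a - hJ \<nu> 0 = (a - 0) * l"
    using MVT[of 0 a "hJ \<nu>"] a continuous_on_subset[OF hJ_cont0[OF nu]] hJ_deriv[OF nu]
    by (fastforce simp: real_differentiable_def)
  have "l = hJd \<nu> z" using DERIV_unique[OF z(3) hJ_deriv[OF nu z(1)]] .
  moreover have "hJ \<nu> a \<ge> 0" using Ja besselJ_eq[OF nu] by simp
  ultimately have "hJd \<nu> z \<ge> 0" using z(4) a hJ_0 by (simp add: zero_le_mult_iff)
  then have zpos: "hJd \<nu> z > 0" using nz[of z] z a by linarith
  have cont: "continuous_on {c..d} (hJd \<nu>)" if "0 < c" for c d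
    using that hJd_cont[OF nu] by (intro continuous_at_imp_continuous_on) auto
  show ?thesis
  proof
    fix x assume x: "x \<in> {0<..b}"
    show "hJd \<nu> x > 0"
    proof (rule ccontr)
      assume "\<not> hJd \<nu> x > 0"
      then have xn: "hJd \<nu> x \<le> 0" by simp
      show False
      proof (cases "x \<le> z")
        case True
        obtain c where "x \<le> c" "c \<le> z" "hJd \<nu> c = 0"
          using IVT'[of "hJd \<nu>" x 0 z] xn zpos True cont[of x z] x by auto
        then show False using nz[of c] x z a by auto
      next
        case False
        obtain c where "z \<le> c" "c \<le> x" "hJd \<nu> c = 0"
          using IVT2'[of "hJd \<nu>" x 0 z] xn zpos False cont[of z x] z by auto
        then show False using nz[of c] x z a by auto
      qed
    qed
  qed
qed

definition GG :: "real \<Rightarrow> real \<Rightarrow> real \<Rightarrow> real \<Rightarrow> real" where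
  "GG s \<mu> \<nu> r = r powr s * PP \<nu> (\<mu> * r\<^sup>2)"
definition GG1 :: "real \<Rightarrow> real \<Rightarrow> real \<Rightarrow> real \<Rightarrow> real" where
  "GG1 s \<mu> \<nu> r = s * r powr (s - 1) * PP \<nu> (\<mu> * r\<^sup>2) + 2 * \<mu> * r powr (s + 1) * PP1 \<nu> (\<mu> * r\<^sup>2)"
definition GG2 :: "real \<Rightarrow> real \<Rightarrow> real \<Rightarrow> real \<Rightarrow> real" where
  "GG2 s \<mu> \<nu> r = s * (s - 1) * r powr (s - 2) * PP \<nu> (\<mu> * r\<^sup>2)
     + 2 * \<mu> * (2 * s + 1) * r powr s * PP1 \<nu> (\<mu> * r\<^sup>2)
     + 4 * \<mu>\<^sup>2 * r powr (s + 2) * PP2 \<nu> (\<mu> * r\<^sup>2)"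

lemma powr_shift:
  assumes "r > (0::real)"
  shows "r powr (s - 1) = r powr s / r" "r powr (s + 1) = r powr s * r"
    "r powr (s - 2) = r powr s / r\<^sup>2" "r powr (s + 2) = r powr s * r\<^sup>2"
  using assms by (simp_all add: powr_diff powr_add power2_eq_square powr_numeral)

lemma PP_comp_deriv:
  assumes "\<nu> > 0"
  shows "((\<lambda>r. PP \<nu> (\<mu> * r\<^sup>2)) has_real_derivative PP1 \<nu> (\<mu> * r\<^sup>2) * (2 * \<mu> * r)) (at r)"
proof -
  have dd: "((\<lambda>r. \<mu> * r\<^sup>2) has_real_derivative 2 * \<mu> * r) (at r)"
    by (auto intro!: derivative_eq_intros)
  show ?thesis using DERIV_chain2[OF PP_deriv[OF assms] dd] by simp
qed

lemma PP1_comp_deriv: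
  assumes "\<nu> > 0"
  shows "((\<lambda>r. PP1 \<nu> (\<mu> * r\<^sup>2)) has_real_derivative PP2 \<nu> (\<mu> * r\<^sup>2) * (2 * \<mu> * r)) (at r)"
proof -
  have dd: "((\<lambda>r. \<mu> * r\<^sup>2) has_real_derivative 2 * \<mu> * r) (at r)"
    by (auto intro!: derivative_eq_intros)
  show ?thesis using DERIV_chain2[OF PP1_deriv[OF assms] dd] by simp
qed

lemma GG_deriv:
  assumes "\<nu> > 0" "r > 0"
  shows "(GG s \<mu> \<nu> has_real_derivative GG1 s \<mu> \<nu> r) (at r)"
proof -
  have "((\<lambda>r. r powr s * PP \<nu> (\<mu> * r\<^sup>2)) has_real_derivative
      s * r powr (s - 1) * PP \<nu> (\<mu> * r\<^sup>2) + r powr s * (PP1 \<nu> (\<mu> * r\<^sup>2) * (2 * \<mu> * r))) (at r)"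
    using DERIV_mult[OF has_real_derivative_powr[OF assms(2)] PP_comp_deriv[OF assms(1)]] by (simp add: algebra_simps)
  moreover have "s * r powr (s - 1) * PP \<nu> (\<mu> * r\<^sup>2) + r powr s * (PP1 \<nu> (\<mu> * r\<^sup>2) * (2 * \<mu> * r))
     = GG1 s \<mu> \<nu> r"
    unfolding GG1_def powr_shift[OF assms(2)] by (simp add: algebra_simps)
  ultimately show ?thesis unfolding GG_def by simp
qed

lemma GG1_deriv:
  assumes "\<nu> > 0" "r > 0"
  shows "(GG1 s \<mu> \<nu> has_real_derivative GG2 s \<mu> \<nu> r) (at r)"
proof -
  have a: "((\<lambda>r. s * r powr (s - 1) * PP \<nu> (\<mu> * r\<^sup>2)) has_real_derivative
      s * ((s - 1) * r powr (s - 1 - 1)) * PP \<nu> (\<mu> * r\<^sup>2) + s * r powr (s - 1) * (PP1 \<nu> (\<mu> * r\<^sup>2) * (2 * \<mu> * r))) (at r)"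
    using DERIV_mult[OF DERIV_cmult[OF has_real_derivative_powr[OF assms(2), of "s - 1"], of s] PP_comp_deriv[OF assms(1), of \<mu> r]] by (simp add: algebra_simps)
  have b: "((\<lambda>r. 2 * \<mu> * r powr (s + 1) * PP1 \<nu> (\<mu> * r\<^sup>2)) has_real_derivative
      2 * \<mu> * ((s + 1) * r powr (s + 1 - 1)) * PP1 \<nu> (\<mu> * r\<^sup>2) + 2 * \<mu> * r powr (s + 1) * (PP2 \<nu> (\<mu> * r\<^sup>2) * (2 * \<mu> * r))) (at r)"
    using DERIV_mult[OF DERIV_cmult[OF has_real_derivative_powr[OF assms(2), of "s + 1"], of "2 * \<mu>"] PP1_comp_deriv[OF assms(1), of \<mu> r]] by (simp add: algebra_simps)
  have e1: "s - 1 - 1 = s - 2" "s + 1 - 1 = s" by simp_all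
  have "s * ((s - 1) * r powr (s - 1 - 1)) * PP \<nu> (\<mu> * r\<^sup>2) + s * r powr (s - 1) * (PP1 \<nu> (\<mu> * r\<^sup>2) * (2 * \<mu> * r))
     + (2 * \<mu> * ((s + 1) * r powr (s + 1 - 1)) * PP1 \<nu> (\<mu> * r\<^sup>2) + 2 * \<mu> * r powr (s + 1) * (PP2 \<nu> (\<mu> * r\<^sup>2) * (2 * \<mu> * r)))
     = GG2 s \<mu> \<nu> r"
    unfolding GG2_def e1 powr_shift[OF assms(2)] using assms(2)
    by (simp add: field_simps power2_eq_square)
  then show ?thesis using DERIV_add[OF a b] unfolding GG1_def by simp
qed

lemma GG_ode:
  assumes "\<nu> > 0" "r > 0" "s = p + \<nu>"
  shows "GG2 s \<mu> \<nu> r + (1 - 2 * p) / r * GG1 s \<mu> \<nu> r + (p\<^sup>2 - \<nu>\<^sup>2) / r\<^sup>2 * GG s \<mu> \<nu> r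
         + 4 * \<mu> * GG s \<mu> \<nu> r = 0"
proof -
  define y where "y = \<mu> * r\<^sup>2"
  define A where "A = PP \<nu> y"
  define B where "B = PP1 \<nu> y"
  define C where "C = PP2 \<nu> y"
  have ode: "y * C = - ((\<nu> + 1) * B) - A" using PP_ode[OF assms(1), of y] unfolding A_def B_def C_def by linarith
  have "GG2 s \<mu> \<nu> r + (1 - 2 * p) / r * GG1 s \<mu> \<nu> r + (p\<^sup>2 - \<nu>\<^sup>2) / r\<^sup>2 * GG s \<mu> \<nu> r
         + 4 * \<mu> * GG s \<mu> \<nu> r
      = r powr s / r\<^sup>2 * ((s * (s - 1) + (1 - 2*p) * s + (p\<^sup>2 - \<nu>\<^sup>2)) * A + 4 * y * A
          + 2 * y * (2 * s + 1 + (1 - 2 * p)) * B + 4 * y * (y * C))"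
    unfolding GG_def GG1_def GG2_def powr_shift[OF assms(2)] A_def[symmetric] B_def[symmetric]
      C_def[symmetric] y_def[symmetric] using assms(2)
    by (simp add: y_def field_simps power2_eq_square)
  also have "\<dots> = 0" unfolding ode assms(3) by (simp add: algebra_simps power2_eq_square)
  finally show ?thesis .
qed

lemma GG_cont:
  assumes "\<nu> > 0" "r > 0"
  shows "isCont (GG s \<mu> \<nu>) r" "isCont (GG1 s \<mu> \<nu>) r"
  using GG_deriv[OF assms] GG1_deriv[OF assms] DERIV_isCont by blast+

lemma second_deriv_max:
  fixes f f' :: "real \<Rightarrow> real"
  assumes ab: "a < x0" "x0 < b"
    and d1: "\<And>x. a < x \<Longrightarrow> x < b \<Longrightarrow> (f has_real_derivative f' x) (at x)"
    and d2: "(f' has_real_derivative l) (at x0)"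
    and f0: "f' x0 = 0"
    and mx: "\<And>x. a < x \<Longrightarrow> x < b \<Longrightarrow> f x \<le> f x0"
  shows "l \<le> 0"
proof (rule ccontr)
  assume "\<not> l \<le> 0"
  then have "l > 0" by simp
  from DERIV_pos_inc_right[OF d2 this] obtain d where d: "d > 0" "\<forall>h>0. h < d \<longrightarrow> f' x0 < f' (x0 + h)"
    by blast
  obtain m where m: "m \<le> b - x0" "m \<le> d" "m > 0" using d ab by (intro that[of "min d (b - x0)"]) auto
  define h where "h = m / 2"
  have h: "h > 0" "h < d" "x0 + h < b" using m unfolding h_def by linarith+
  obtain z where z: "x0 < z" "z < x0 + h" "f (x0 + h) - f x0 = (x0 + h - x0) * f' z"
    using MVT2[of x0 "x0 + h" f f'] h d1 ab by force
  have "f' z > 0" using d(2)[rule_format, of "z - x0"] z h f0 by auto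
  then have "h * f' z > 0" using h by simp
  then have "f (x0 + h) > f x0" using z by simp
  moreover have "f (x0 + h) \<le> f x0" using mx[of "x0 + h"] h ab by simp
  ultimately show False by simp
qed

lemma max_principle:
  fixes w wr wrr wt :: "real \<Rightarrow> real \<Rightarrow> real"
  assumes ab: "a < b" and T: "T > 0"
    and cont: "continuous_on ({a..b} \<times> {0..T}) (\<lambda>p. w (fst p) (snd p))"
    and bdry: "\<And>t. t \<in> {0..T} \<Longrightarrow> w a t \<le> 0" "\<And>t. t \<in> {0..T} \<Longrightarrow> w b t \<le> 0"
      "\<And>r. r \<in> {a..b} \<Longrightarrow> w r 0 \<le> 0"
    and dr: "\<And>r t. r \<in> {a<..<b} \<Longrightarrow> t \<in> {0<..T} \<Longrightarrow> ((\<lambda>s. w s t) has_real_derivative wr r t) (at r)"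
    and drr: "\<And>r t. r \<in> {a<..<b} \<Longrightarrow> t \<in> {0<..T} \<Longrightarrow> ((\<lambda>s. wr s t) has_real_derivative wrr r t) (at r)"
    and dt: "\<And>r t. r \<in> {a<..<b} \<Longrightarrow> t \<in> {0<..T} \<Longrightarrow> ((\<lambda>s. w r s) has_real_derivative wt r t) (at t)"
    and key: "\<And>r t. r \<in> {a<..<b} \<Longrightarrow> t \<in> {0<..T} \<Longrightarrow> w r t > 0 \<Longrightarrow> wr r t = 0 \<Longrightarrow> wrr r t \<le> 0 \<Longrightarrow> wt r t < 0"
  shows "\<forall>r\<in>{a..b}. \<forall>t\<in>{0..T}. w r t \<le> 0"
proof -
  have "compact ({a..b} \<times> {0..T})" by (intro compact_Times compact_Icc)
  moreover have "{a..b} \<times> {0..T} \<noteq> {}" using ab T by auto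
  ultimately obtain p where p: "p \<in> {a..b} \<times> {0..T}" and pm: "\<forall>q\<in>{a..b} \<times> {0..T}. w (fst q) (snd q) \<le> w (fst p) (snd p)"
    using continuous_attains_sup[OF _ _ cont] by blast
  define r0 t0 where "r0 = fst p" "t0 = snd p"
  have mx: "\<And>r t. r \<in> {a..b} \<Longrightarrow> t \<in> {0..T} \<Longrightarrow> w r t \<le> w r0 t0"
    using pm unfolding r0_t0_def by force
  have r0t0: "r0 \<in> {a..b}" "t0 \<in> {0..T}" using p unfolding r0_t0_def by auto
  show ?thesis
  proof (cases "w r0 t0 \<le> 0")
    case True then show ?thesis using mx by force
  next
    case False
    then have pos: "w r0 t0 > 0" by simp
    have r0: "r0 \<in> {a<..<b}" using bdry(1,2)[of t0] r0t0 pos by (auto simp: less_le)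
    have t0: "t0 \<in> {0<..T}" using bdry(3)[of r0] r0t0 pos by (auto simp: less_le)
    have wr0: "wr r0 t0 = 0"
    proof (rule DERIV_local_max[OF dr[OF r0 t0], of "min (r0 - a) (b - r0)"])
      show "0 < min (r0 - a) (b - r0)" using r0 by auto
      show "\<forall>y. \<bar>r0 - y\<bar> < min (r0 - a) (b - r0) \<longrightarrow> w y t0 \<le> w r0 t0"
        using mx t0 by (auto simp: abs_if split: if_splits)
    qed
    have wrr0: "wrr r0 t0 \<le> 0"
      by (rule second_deriv_max[of a r0 b "\<lambda>s. w s t0" "\<lambda>s. wr s t0"])
         (use r0 t0 dr drr wr0 mx in auto)
    have wt0: "wt r0 t0 \<ge> 0"
    proof (rule ccontr)
      assume "\<not> wt r0 t0 \<ge> 0"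
      then have "wt r0 t0 < 0" by simp
      from DERIV_neg_dec_left[OF dt[OF r0 t0] this] obtain d where
        d: "d > 0" "\<forall>h>0. h < d \<longrightarrow> w r0 t0 < w r0 (t0 - h)" by blast
      define h where "h = min d t0 / 2"
      have h: "h > 0" "h < d" "t0 - h \<ge> 0" using d t0 unfolding h_def by auto
      have "w r0 t0 < w r0 (t0 - h)" using d h by auto
      moreover have "w r0 (t0 - h) \<le> w r0 t0" using mx[of r0 "t0 - h"] r0 t0 h by auto
      ultimately show False by simp
    qed
    show ?thesis using key[OF r0 t0 pos wr0 wrr0] wt0 by simp
  qed
qed

lemma q_facts:
  assumes r: "(r::real) > 0"
  shows "r = (r powr (1/3))^3" "r powr (-2/3) = 1/(r powr (1/3))^2" "r powr (-5/3) = 1 / (r powr (1/3))^5"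
proof -
  define q where "q = r powr (1/3)"
  have q0: "q > 0" using q_def r by simp
  have p: "q powr (x) = r powr (x/3)" for x using q_def r by (simp add: powr_powr)
  have "q^3 = q powr 3" using q0 by (simp add: powr_realpow)
  also have "\<dots> = r" using p[of 3] r by simp
  finally show "r = (r powr (1/3))^3" unfolding q_def by simp
  have "1/q^2 = q powr (-2)" using q0 by (simp add: powr_minus powr_realpow divide_inverse)
  also have "\<dots> = r powr (-2/3)" using p[of "-2"] by simp
  finally show "r powr (-2/3) = 1/(r powr (1/3))^2" unfolding q_def by simp
  have "1/q^5 = q powr (-5)" using q0 by (simp add: powr_minus powr_realpow divide_inverse)
  also have "\<dots> = r powr (-5/3)" using p[of "-5"] by simp
  finally show "r powr (-5/3) = 1/(r powr (1/3))^5" unfolding q_def by simp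
qed

lemma alg_ineq:
  fixes A B W W1 :: real
  assumes "A > 0" "B > 0" "W \<ge> 0" "W1 \<ge> 0"
  shows "3*A*B^2*W1 + B^3*W + A*B^3 - (A+W)*(B+W1)^3 \<le> 0"
proof -
  have e: "(A+W)*(B+W1)^3 - (3*A*B^2*W1 + B^3*W + A*B^3) = A*(3*B*W1^2 + W1^3) + W*((B+W1)^3 - B^3)"
    by (simp add: algebra_simps power2_eq_square power3_eq_cube)
  have "(B+W1)^3 \<ge> B^3" using assms by (intro power_mono) auto
  then have "A*(3*B*W1^2 + W1^3) + W*((B+W1)^3 - B^3) \<ge> 0" using assms
    by (intro add_nonneg_nonneg mult_nonneg_nonneg) auto
  then show ?thesis using e by linarith
qed



lemma sup_bound:
  fixes g h :: "real \<Rightarrow> real"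
  assumes "\<And>x. x \<in> {a..b} \<Longrightarrow> isCont g x" "\<And>x. x \<in> {a..b} \<Longrightarrow> h x = \<bar>g x\<bar>"
    "c > (SUP x\<in>{a..b}. h x)" "x \<in> {a..b}"
  shows "\<bar>g x\<bar> < c"
proof -
  have im: "h ` {a..b} = (\<lambda>x. \<bar>g x\<bar>) ` {a..b}" using assms(2) by auto
  have "continuous_on {a..b} (\<lambda>x. \<bar>g x\<bar>)"
    using assms(1) by (intro continuous_at_imp_continuous_on ballI continuous_intros) auto
  then have "compact ((\<lambda>x. \<bar>g x\<bar>) ` {a..b})" by (intro compact_continuous_image) auto
  then have "bdd_above (h ` {a..b})" unfolding im by (intro bounded_imp_bdd_above compact_imp_bounded)
  then have "h x \<le> (SUP x\<in>{a..b}. h x)" using assms(4) by (intro cSUP_upper)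
  then show ?thesis using assms(2)[OF assms(4)] assms(3) by simp
qed

theorem mainTheorem13:
  fixes n :: nat and R :: real
    and u0 u0r u0rr :: "real \<Rightarrow> real"
    and lam Cv :: real
    and \<epsilon> :: real
    and u0e u0er u0err :: "real \<Rightarrow> real"
    and cstar :: real
    and f :: "real \<Rightarrow> real"
    and u ur urr ut :: "real \<Rightarrow> real \<Rightarrow> real"
  assumes n2: "n \<ge> 2"
    and R_pos: "0 < R"
    and R_bound: "R < sqrt (3/8 * (3 * real n - 5) * (2 * real n - 3) ^ 3)"
    \<comment> \<open>(C1)-(C2): u0 radial, C^2 on the closed ball minus the origin\<close>
    and u0_d1: "\<And>r. r \<in> {0<..R} \<Longrightarrow> (u0 has_real_derivative u0r r) (at r within {0<..R})"
    and u0_d2: "\<And>r. r \<in> {0<..R} \<Longrightarrow> (u0r has_real_derivative u0rr r) (at r within {0<..R})"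
    and u0_c2: "continuous_on {0<..R} u0rr"
    \<comment> \<open>(C3)\<close>
    and C3: "\<And>r. r \<in> {0<..R} \<Longrightarrow> ustar n r \<ge> u0 r"
    \<comment> \<open>(C4)\<close>
    and C4: "\<exists>M. eventually (\<lambda>r. \<bar>r powr (3/2 - real n - nu_const n) * (ustar n r - u0 r)\<bar> \<le> M) (at_right 0)"
    \<comment> \<open>(C5)\<close>
    and C5: "u0 R = ustar n R"
    \<comment> \<open>(C6)\<close>
    and C6: "\<exists>C>0. \<forall>r\<in>{0<..<R}. 0 \<ge> u0r r \<and> u0r r \<ge> - C * r powr (-2/3)"
    \<comment> \<open>lambda and C of the comparison function v\<close>
    and lam_pos: "0 < lam"
    and lamR: "lam * R < besselJ_deriv_first_root (nu_const n)"
    and Cv_pos: "0 < Cv"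
    and u0_ge_v: "\<And>r. r \<in> {0<..<R} \<Longrightarrow> u0 r \<ge> ustar n r - vfun n Cv lam r 0"
    \<comment> \<open>epsilon and the approximate initial datum\<close>
    and eps: "0 < \<epsilon>" "\<epsilon> < R"
    and u0e_d1: "\<And>r. r \<in> {\<epsilon>..R} \<Longrightarrow> (u0e has_real_derivative u0er r) (at r within {\<epsilon>..R})"
    and u0e_d2: "\<And>r. r \<in> {\<epsilon>..R} \<Longrightarrow> (u0er has_real_derivative u0err r) (at r within {\<epsilon>..R})"
    and u0e_c2: "continuous_on {\<epsilon>..R} u0err"
    and u0e_eps: "u0e \<epsilon> = ustar n \<epsilon> - vfun n Cv lam \<epsilon> 0"
    and u0e_slope: "\<And>r. r \<in> {\<epsilon>..R} \<Longrightarrow> u0r r \<le> u0er r \<and> u0er r \<le> 0"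
    and u0e_bounds: "\<And>r. r \<in> {\<epsilon>..R} \<Longrightarrow> ustar n r \<ge> u0e r \<and> u0e r \<ge> ustar n r - vfun n Cv lam r 0"
    and u0e_eq: "\<And>r. r \<in> {\<epsilon><..R} \<Longrightarrow> u0 r < ustar n \<epsilon> - vfun n Cv lam \<epsilon> 0 - \<epsilon> \<Longrightarrow> u0e r = u0 r"
    \<comment> \<open>the constant c*_eps (c_v = - e^(lambda^2 t) v(eps,t) = - v(eps,0))\<close>
    and cstar1: "cstar > 1"
    and cstar2: "cstar > (SUP r\<in>{\<epsilon>..R}. \<bar>deriv (ustar n) r\<bar>)"
    and cstar3: "cstar > (SUP r\<in>{\<epsilon>..R}. \<bar>deriv (\<lambda>s. ustar n s - vfun n Cv lam s 0) r\<bar>)"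
    and cstar4: "cstar > (SUP r\<in>{\<epsilon>..R}. \<bar>u0er r\<bar>)"
    and cstar5: "- vfun n Cv lam \<epsilon> 0 + (real n - 1) / \<epsilon> * cstar + ustar n \<epsilon> * cstar ^ 3 \<le> 0"
    \<comment> \<open>the cut-off nonlinearity f_eps\<close>
    and f_smooth: "smooth_compact_support f"
    and f_cube: "\<And>s. \<bar>s\<bar> \<le> cstar \<Longrightarrow> f s = s ^ 3"
    and f_neg: "\<And>s. s < 0 \<Longrightarrow> f s \<le> 0"
    \<comment> \<open>regularity of the radial solution u_eps\<close>
    and u_cont: "continuous_on ({\<epsilon>..R} \<times> {0..}) (\<lambda>(r, t). u r t)"
    and u_r: "\<And>r t. r \<in> {\<epsilon><..<R} \<Longrightarrow> t > 0 \<Longrightarrow> ((\<lambda>s. u s t) has_real_derivative ur r t) (at r)"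
    and u_rr: "\<And>r t. r \<in> {\<epsilon><..<R} \<Longrightarrow> t > 0 \<Longrightarrow> ((\<lambda>s. ur s t) has_real_derivative urr r t) (at r)"
    and u_t: "\<And>r t. r \<in> {\<epsilon><..<R} \<Longrightarrow> t > 0 \<Longrightarrow> ((\<lambda>s. u r s) has_real_derivative ut r t) (at t)"
    and derivs_cont: "continuous_on ({\<epsilon><..<R} \<times> {0<..}) (\<lambda>(r, t). ur r t)"
      "continuous_on ({\<epsilon><..<R} \<times> {0<..}) (\<lambda>(r, t). urr r t)"
      "continuous_on ({\<epsilon><..<R} \<times> {0<..}) (\<lambda>(r, t). ut r t)"
    and grad_loc_bdd: "\<And>T. T > 0 \<Longrightarrow> \<exists>M. \<forall>r\<in>{\<epsilon><..<R}. \<forall>t\<in>{0<..T}. \<bar>ur r t\<bar> \<le> M"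
    \<comment> \<open>the equation (Laplacian of a radial function in R^n), boundary and initial data\<close>
    and pde: "\<And>r t. r \<in> {\<epsilon><..<R} \<Longrightarrow> t > 0 \<Longrightarrow>
               ut r t = urr r t + (real n - 1) / r * ur r t + u r t * f (ur r t)"
    and bc_eps: "\<And>t. t > 0 \<Longrightarrow> u \<epsilon> t = ustar n \<epsilon> - vfun n Cv lam \<epsilon> t"
    and bc_R: "\<And>t. t > 0 \<Longrightarrow> u R t = ustar n R"
    and ic: "\<And>r. r \<in> {\<epsilon>..R} \<Longrightarrow> u r 0 = u0e r"
  shows "\<forall>r\<in>{\<epsilon><..<R}. \<forall>t>0. ustar n r \<ge> u r t \<and> u r t \<ge> ustar n r - vfun n Cv lam r t"
proof -
  have n2r: "real n \<ge> 2" using n2 by simp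
  define \<alpha> where "\<alpha> = alpha_const n"
  have \<alpha>3: "\<alpha>^3 = 9 * real n - 15" unfolding \<alpha>_def alpha_const_def using n2r
    by (subst real_root_pow_pos2) auto
  have \<alpha>0: "\<alpha> > 0" unfolding \<alpha>_def alpha_const_def using n2r by simp
  have ustar_eq: "ustar n r = - \<alpha> * r powr (1/3)" for r unfolding ustar_def \<alpha>_def by simp
  define \<nu> where "\<nu> = nu_const n"
  have disc: "36 * (real n)^2 - 96 * real n + 61 > 0"
  proof -
    have "36 * (real n)^2 - 96 * real n + 61 = 36 * (real n - 4/3)^2 - 3" by (simp add: power2_eq_square algebra_simps)
    moreover have "(real n - 4/3)^2 \<ge> (2/3)^2" using n2r by (intro power_mono) auto
    ultimately show ?thesis by (simp add: power2_eq_square)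
  qed
  have \<nu>0: "\<nu> > 0" unfolding \<nu>_def nu_const_def using disc by simp
  have \<nu>2: "\<nu>^2 = (36 * (real n)^2 - 96 * real n + 61) / 36" unfolding \<nu>_def nu_const_def
    using disc by (simp add: power_divide)
  define p where "p = real n - 3/2"
  have p0: "p > 0" unfolding p_def using n2r by simp
  define s where "s = p + \<nu>"
  define \<mu> where "\<mu> = lam^2 / 4"
  define K where "K = (lam/2) powr \<nu>"
  have K0: "K > 0" unfolding K_def using lam_pos by simp
  define \<theta> where "\<theta> t = exp (- (lam^2) * t)" for t
  define Vf where "Vf r = Cv * K * GG s \<mu> \<nu> r" for r
  define V1 where "V1 r = Cv * K * GG1 s \<mu> \<nu> r" for r
  define V2 where "V2 r = Cv * K * GG2 s \<mu> \<nu> r" for r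
  have vfun_t: "vfun n Cv lam r t = \<theta> t * vfun n Cv lam r 0" for r t
    unfolding vfun_def \<theta>_def by simp
  have vfun_eq: "vfun n Cv lam r t = \<theta> t * Vf r" if r: "r > 0" for r t
  proof -
    have "besselJ \<nu> (lam * r) = PP \<nu> (\<mu> * r^2) * ((lam/2) powr \<nu> * r powr \<nu>)"
      unfolding besselJ_eq[OF \<nu>0] hJ_def \<mu>_def
      using r lam_pos by (simp add: powr_mult[symmetric] power_mult_distrib field_simps)
    then show ?thesis unfolding vfun_def Vf_def GG_def \<theta>_def K_def s_def p_def \<nu>_def[symmetric]
      using r by (simp add: powr_add)
  qed
  define ua where "ua r = - \<alpha> / 3 * r powr (-2/3)" for r
  define uaa where "uaa r = 2 * \<alpha> / 9 * r powr (-5/3)" for r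
  have ustar_d: "((\<lambda>s. - \<alpha> * s powr (1/3)) has_real_derivative ua r) (at r)" if "r > 0" for r
    using DERIV_cmult[OF has_real_derivative_powr[OF that, of "1/3"], of "-\<alpha>"] unfolding ua_def
    by simp
  have ua_d: "(ua has_real_derivative uaa r) (at r)" if "r > 0" for r
    unfolding ua_def uaa_def
    by (rule DERIV_cong[OF DERIV_cmult[OF has_real_derivative_powr[OF that, of "-2/3"], of "-\<alpha>/3"]])
       (simp add: algebra_simps)
  have ua_q: "ua r = - \<alpha> / (3 * (r powr (1/3))^2)" if "r > 0" for r
    unfolding ua_def q_facts(2)[OF that] by simp
  have uaa_q: "uaa r = 2 * \<alpha> / (9 * (r powr (1/3))^5)" if "r > 0" for r
    unfolding uaa_def q_facts(3)[OF that] by simp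
  have ua_neg: "ua r < 0" if "r > 0" for r unfolding ua_def using \<alpha>0 that by simp
  have stat: "uaa r + (real n - 1) / r * ua r + (- \<alpha> * r powr (1/3)) * (ua r)^3 = 0" if r: "r > 0" for r
  proof -
    define q where "q = r powr (1/3)"
    have q0: "q > 0" using r q_def by simp
    have rq: "r = q^3" using q_facts(1)[OF r] q_def by simp
    have "uaa r + (real n - 1) / r * ua r + (- \<alpha> * r powr (1/3)) * (ua r)^3
        = \<alpha> / q^5 * (2/9 - (real n - 1)/3 + \<alpha>^3/27)"
      unfolding ua_q[OF r] uaa_q[OF r] q_def[symmetric] using q0 rq
      by (simp add: field_simps power2_eq_square power3_eq_cube) (simp add: algebra_simps numeral_eq_Suc)
    also have "\<dots> = 0" unfolding \<alpha>3 by (simp add: field_simps)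
    finally show ?thesis .
  qed
  have \<theta>0: "\<theta> 0 = 1" unfolding \<theta>_def by simp
  have \<theta>pos: "\<theta> t > 0" for t unfolding \<theta>_def by simp
  have \<theta>le1: "\<theta> t \<le> 1" if "t \<ge> 0" for t unfolding \<theta>_def using that by simp
  have vnn: "vfun n Cv lam r 0 \<ge> 0" if "r \<in> {\<epsilon>..R}" for r using u0e_bounds[OF that] by linarith
  have Vf_nn: "Vf r \<ge> 0" if "r \<in> {\<epsilon>..R}" for r using vnn[OF that] vfun_eq[of r 0] that eps \<theta>0 by simp
  have J\<epsilon>: "besselJ \<nu> (lam * \<epsilon>) \<ge> 0"
  proof -
    have "Cv * \<epsilon> powr (real n - 3/2) * besselJ \<nu> (lam * \<epsilon>) \<ge> 0"
      using vnn[of \<epsilon>] eps unfolding vfun_def \<nu>_def by simp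
    moreover have "Cv * \<epsilon> powr (real n - 3/2) > 0" using Cv_pos eps by simp
    ultimately show ?thesis by (simp add: zero_le_mult_iff)
  qed
  have hpos: "\<forall>x\<in>{0<..lam * R}. hJd \<nu> x > 0"
    by (rule hJd_pos[OF \<nu>0, of "lam * \<epsilon>"]) (use lam_pos eps lamR J\<epsilon> in \<open>auto simp: \<nu>_def\<close>)
  have V1_nn: "V1 r \<ge> 0" if r: "r \<in> {\<epsilon>..R}" for r
  proof -
    have r0: "r > 0" using r eps by simp
    define x where "x = lam * r"
    have x0: "x > 0" using r0 lam_pos x_def by simp
    have "hJd \<nu> x > 0" using hpos r lam_pos x0 unfolding x_def by auto
    moreover have "hJd \<nu> x = (x/2) powr \<nu> * (PP1 \<nu> (x\<^sup>2/4) * (x/2) + PP \<nu> (x\<^sup>2/4) * \<nu> / x)"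
      unfolding hJd_def using x0 by (simp add: powr_diff field_simps)
    ultimately have "PP1 \<nu> (x\<^sup>2/4) * (x/2) + PP \<nu> (x\<^sup>2/4) * \<nu> / x > 0"
      using x0 by (simp add: zero_less_mult_iff)
    then have "x * (PP1 \<nu> (x\<^sup>2/4) * (x/2) + PP \<nu> (x\<^sup>2/4) * \<nu> / x) > 0" using x0 by simp
    moreover have xx: "x\<^sup>2/4 = \<mu> * r\<^sup>2" unfolding x_def \<mu>_def by (simp add: power_mult_distrib)
    moreover have "x * (PP1 \<nu> (\<mu> * r\<^sup>2) * (x/2) + PP \<nu> (\<mu> * r\<^sup>2) * \<nu> / x)
        = 2 * \<mu> * r\<^sup>2 * PP1 \<nu> (\<mu> * r\<^sup>2) + \<nu> * PP \<nu> (\<mu> * r\<^sup>2)"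
      using x0 xx by (simp add: field_simps power2_eq_square)
    ultimately have a: "2 * \<mu> * r\<^sup>2 * PP1 \<nu> (\<mu> * r\<^sup>2) + \<nu> * PP \<nu> (\<mu> * r\<^sup>2) > 0"
      by simp
    have "Cv * K * r powr s * PP \<nu> (\<mu> * r\<^sup>2) \<ge> 0" using Vf_nn[OF r] unfolding Vf_def GG_def by (simp add: mult.assoc)
    moreover have "Cv * K * r powr s > 0" using Cv_pos K0 r0 by simp
    ultimately have b: "PP \<nu> (\<mu> * r\<^sup>2) \<ge> 0" by (simp add: zero_le_mult_iff)
    have "GG1 s \<mu> \<nu> r = r powr (s - 1) * (p * PP \<nu> (\<mu> * r\<^sup>2) + (2 * \<mu> * r\<^sup>2 * PP1 \<nu> (\<mu> * r\<^sup>2) + \<nu> * PP \<nu> (\<mu> * r\<^sup>2)))"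
      unfolding GG1_def powr_shift[OF r0] s_def using r0 by (simp add: field_simps power2_eq_square)
    moreover have "p * PP \<nu> (\<mu> * r\<^sup>2) + (2 * \<mu> * r\<^sup>2 * PP1 \<nu> (\<mu> * r\<^sup>2) + \<nu> * PP \<nu> (\<mu> * r\<^sup>2)) \<ge> 0"
      using a b p0 by (simp add: add_nonneg_nonneg)
    ultimately have "GG1 s \<mu> \<nu> r \<ge> 0" using r0 by simp
    then show ?thesis unfolding V1_def using Cv_pos K0 by simp
  qed
  have ua_cont: "isCont ua r" if "r > 0" for r using ua_d[OF that] DERIV_isCont by blast
  have ua_bd: "\<bar>ua r\<bar> < cstar" if r: "r \<in> {\<epsilon>..R}" for r
  proof (rule sup_bound[OF _ _ cstar2 r])
    fix x assume x: "x \<in> {\<epsilon>..R}"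
    then have x0: "x > 0" using eps by simp
    show "isCont ua x" using ua_cont[OF x0] .
    have "ustar n = (\<lambda>s. - \<alpha> * s powr (1/3))" using ustar_eq by auto
    then show "\<bar>deriv (ustar n) x\<bar> = \<bar>ua x\<bar>" using DERIV_imp_deriv[OF ustar_d[OF x0]] by simp
  qed
  have V1_cont: "isCont V1 r" if "r > 0" for r
    unfolding V1_def using GG_cont(2)[OF \<nu>0 that] by (intro continuous_intros)
  have Vf_d: "(Vf has_real_derivative V1 r) (at r)" if "r > 0" for r
    unfolding Vf_def V1_def by (rule DERIV_cmult[OF GG_deriv[OF \<nu>0 that]])
  have V1_d: "(V1 has_real_derivative V2 r) (at r)" if "r > 0" for r
    unfolding V2_def V1_def by (rule DERIV_cmult[OF GG1_deriv[OF \<nu>0 that]])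
  have zb_bd: "\<bar>ua r - V1 r\<bar> < cstar" if r: "r \<in> {\<epsilon>..R}" for r
  proof (rule sup_bound[OF _ _ cstar3 r])
    fix x assume x: "x \<in> {\<epsilon>..R}"
    then have x0: "x > 0" using eps by simp
    show "isCont (\<lambda>x. ua x - V1 x) x" using ua_cont[OF x0] V1_cont[OF x0] by (intro continuous_intros)
    have "((\<lambda>s. - \<alpha> * s powr (1/3) - Vf s) has_real_derivative ua x - V1 x) (at x)"
      by (intro DERIV_diff ustar_d Vf_d x0)
    then have "((\<lambda>s. ustar n s - vfun n Cv lam s 0) has_real_derivative ua x - V1 x) (at x)"
      by (rule has_field_derivative_transform_within_open[of _ _ _ "{0<..}"])
         (use x0 vfun_eq \<theta>0 ustar_eq in auto)
    then show "\<bar>deriv (\<lambda>s. ustar n s - vfun n Cv lam s 0) x\<bar> = \<bar>ua x - V1 x\<bar>"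
      using DERIV_imp_deriv by metis
  qed
  have ode: "V2 r + (1 - 2 * p) / r * V1 r + (p\<^sup>2 - \<nu>\<^sup>2) / r\<^sup>2 * Vf r + lam\<^sup>2 * Vf r = 0" if "r > 0" for r
  proof -
    have "GG2 s \<mu> \<nu> r + (1 - 2 * p) / r * GG1 s \<mu> \<nu> r + (p\<^sup>2 - \<nu>\<^sup>2) / r\<^sup>2 * GG s \<mu> \<nu> r
         + 4 * \<mu> * GG s \<mu> \<nu> r = 0" by (rule GG_ode[OF \<nu>0 that s_def])
    then have "Cv * K * (GG2 s \<mu> \<nu> r + (1 - 2 * p) / r * GG1 s \<mu> \<nu> r + (p\<^sup>2 - \<nu>\<^sup>2) / r\<^sup>2 * GG s \<mu> \<nu> r
         + 4 * \<mu> * GG s \<mu> \<nu> r) = 0" by simp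
    then show ?thesis unfolding V2_def V1_def Vf_def \<mu>_def by (simp add: algebra_simps)
  qed
  have hp1: "1 - 2 * p = 4 - 2 * real n" unfolding p_def by simp
  have hp2: "p\<^sup>2 - \<nu>\<^sup>2 = - (3 * real n - 5) / 9" unfolding p_def \<nu>2 by (simp add: power2_eq_square field_simps)
  have AB: "3 * (\<alpha> * r powr (1/3)) * (- ua r)^2 = (3 * real n - 5) / r"
     "(- ua r)^3 = (3 * real n - 5) / (9 * r^2)" if r: "r > 0" for r
  proof -
    define q where "q = r powr (1/3)"
    have q0: "q > 0" using r q_def by simp
    have rq: "r = q^3" using q_facts(1)[OF r] q_def by simp
    show "3 * (\<alpha> * r powr (1/3)) * (- ua r)^2 = (3 * real n - 5) / r"
      unfolding ua_q[OF r] q_def[symmetric] using q0 rq \<alpha>3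
      by (simp add: field_simps power2_eq_square power3_eq_cube)
    show "(- ua r)^3 = (3 * real n - 5) / (9 * r^2)"
      unfolding ua_q[OF r] q_def[symmetric] using q0 rq \<alpha>3
      by (simp add: field_simps power2_eq_square power3_eq_cube)
  qed
  have key_up: "ut r t < 0" if r: "r \<in> {\<epsilon><..<R}" and t: "t > 0"
      and w: "u r t - (- \<alpha> * r powr (1/3)) > 0" and wr: "ur r t - ua r = 0" and wrr: "urr r t - uaa r \<le> 0" for r t
  proof -
    have r0: "r > 0" using r eps by simp
    have f: "f (ur r t) = (ua r)^3" using wr f_cube[of "ua r"] ua_bd[of r] r by simp
    have e1: "ut r t = urr r t + (real n - 1) / r * ua r + u r t * (ua r)^3" using pde[OF r t] f wr by simp
    have e2: "ut r t = (urr r t - uaa r) + (u r t - (- \<alpha> * r powr (1/3))) * (ua r)^3"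
      using e1 stat[OF r0] by (simp add: algebra_simps)
    have "(ua r)^3 < 0" using ua_neg[OF r0] by (simp add: power3_eq_cube mult_pos_neg mult_neg_neg)
    then have "(u r t - (- \<alpha> * r powr (1/3))) * (ua r)^3 < 0" using w by (simp add: mult_pos_neg)
    then show ?thesis using e2 wrr by linarith
  qed
  have key_lo: "lam\<^sup>2 * \<theta> t * Vf r - ut r t < 0" if r: "r \<in> {\<epsilon><..<R}" and t: "t > 0"
      and w: "(- \<alpha> * r powr (1/3) - \<theta> t * Vf r) - u r t > 0"
      and wr: "ua r - \<theta> t * V1 r - ur r t = 0"
      and wrr: "uaa r - \<theta> t * V2 r - urr r t \<le> 0" for r t
  proof -
    have r0: "r > 0" using r eps by simp
    have rc: "r \<in> {\<epsilon>..R}" using r by simp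
    define W where "W = \<theta> t * Vf r"
    define W1 where "W1 = \<theta> t * V1 r"
    define zr where "zr = ua r - W1"
    define A where "A = \<alpha> * r powr (1/3)"
    define B where "B = - ua r"
    have W0: "W \<ge> 0" unfolding W_def using \<theta>pos[of t] Vf_nn[OF rc] by simp
    have W10: "W1 \<ge> 0" unfolding W1_def using \<theta>pos[of t] V1_nn[OF rc] by simp
    have A0: "A > 0" unfolding A_def using \<alpha>0 r0 by simp
    have B0: "B > 0" unfolding B_def using ua_neg[OF r0] by simp
    have W1le: "W1 \<le> V1 r" unfolding W1_def using \<theta>le1[of t] t V1_nn[OF rc]
      using mult_right_mono[of "\<theta> t" 1 "V1 r"] by simp
    have zrneg: "zr < 0" unfolding zr_def using ua_neg[OF r0] W10 by simp
    have zrlo: "zr \<ge> ua r - V1 r" unfolding zr_def using W1le by simp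
    have "\<bar>zr\<bar> \<le> cstar" using zb_bd[OF rc] zrneg zrlo ua_neg[OF r0] by linarith
    then have f: "f (ur r t) = zr^3" using wr f_cube unfolding zr_def W1_def by simp
    have urz: "ur r t = zr" using wr unfolding zr_def W1_def by simp
    have e1: "ut r t = urr r t + (real n - 1) / r * zr + u r t * zr^3" using pde[OF r t] f urz by simp
    have zr3: "zr^3 < 0" using zrneg by (simp add: power3_eq_cube mult_pos_neg mult_neg_neg)
    have "((- A - W) - u r t) * zr^3 < 0" using w zr3 unfolding A_def W_def by (simp add: mult_pos_neg)
    then have ineq1: "- u r t * zr^3 < - (- A - W) * zr^3" by (simp add: algebra_simps)
    define E where "E = lam\<^sup>2 * W - uaa r + \<theta> t * V2 r - (real n - 1) / r * zr - (- A - W) * zr^3"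
    have lt: "lam\<^sup>2 * \<theta> t * Vf r - ut r t < E"
      unfolding E_def using e1 ineq1 wrr unfolding W_def by (simp add: algebra_simps)
    have h1: "\<theta> t * V2 r = - (1 - 2 * p) / r * W1 - (p\<^sup>2 - \<nu>\<^sup>2) / r\<^sup>2 * W - lam\<^sup>2 * W"
    proof -
      have v2: "V2 r = - ((1 - 2 * p) / r * V1 r) - (p\<^sup>2 - \<nu>\<^sup>2) / r\<^sup>2 * Vf r - lam\<^sup>2 * Vf r"
        using ode[OF r0] by linarith
      show ?thesis unfolding W_def W1_def v2 by (simp add: algebra_simps diff_divide_distrib)
    qed
    have h2: "uaa r = - ((real n - 1) / r * ua r) + A * (ua r)^3"
    proof -
      have "(- \<alpha> * r powr (1/3)) * (ua r)^3 = - (A * (ua r)^3)" unfolding A_def by simp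
      then show ?thesis using stat[OF r0] by linarith
    qed
    have "E = (3 * real n - 5) / r * W1 + (3 * real n - 5) / (9 * r\<^sup>2) * W - A * (ua r)^3 + (A + W) * (ua r - W1)^3"
      unfolding E_def h1 h2 hp1 hp2 zr_def using r0 by (simp add: field_simps)
    also have "\<dots> = 3*A*B^2*W1 + B^3*W + A*B^3 - (A+W)*(B+W1)^3"
      unfolding B_def AB(1)[OF r0, symmetric] AB(2)[OF r0, symmetric] A_def
      by (simp add: algebra_simps power3_eq_cube power2_eq_square)
    also have "\<dots> \<le> 0" by (rule alg_ineq[OF A0 B0 W0 W10])
    finally show ?thesis using lt by linarith
  qed
  have \<theta>_d: "(\<theta> has_real_derivative - (lam\<^sup>2) * \<theta> t) (at t)" for t
    unfolding \<theta>_def by (auto intro!: derivative_eq_intros)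
  have vfun_nn: "vfun n Cv lam r t \<ge> 0" if "r \<in> {\<epsilon>..R}" for r t
    using vfun_t[of r t] vnn[OF that] \<theta>pos[of t] by simp
  show ?thesis
  proof (intro ballI allI impI)
    fix r t :: real assume r: "r \<in> {\<epsilon><..<R}" and t: "t > 0"
    have r0: "r > 0" using r eps by simp
    have S_sub: "{\<epsilon>..R} \<times> {0..t} \<subseteq> {\<epsilon>..R} \<times> {0..}" by auto
    have uc: "continuous_on ({\<epsilon>..R} \<times> {0..t}) (\<lambda>p. u (fst p) (snd p))"
      using continuous_on_subset[OF u_cont S_sub] by (simp add: case_prod_unfold)
    have pc: "continuous_on ({\<epsilon>..R} \<times> {0..t}) (\<lambda>p. - \<alpha> * fst p powr (1/3))"
      by (intro continuous_intros) (use eps in auto)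
    have Vfc0: "continuous_on {0<..} Vf"
      using Vf_d by (intro continuous_at_imp_continuous_on ballI DERIV_isCont) auto
    have Vfc: "continuous_on ({\<epsilon>..R} \<times> {0..t}) (\<lambda>p. \<theta> (snd p) * Vf (fst p))"
    proof -
      have "continuous_on ({\<epsilon>..R} \<times> {0..t}) (\<lambda>p. Vf (fst p))"
        by (rule continuous_on_compose2[OF Vfc0 continuous_on_fst]) (use eps in auto)
      then show ?thesis unfolding \<theta>_def by (intro continuous_intros)
    qed
    have up: "\<forall>r\<in>{\<epsilon>..R}. \<forall>s\<in>{0..t}. u r s - (- \<alpha> * r powr (1/3)) \<le> 0"
    proof (rule max_principle[where wr = "\<lambda>r s. ur r s - ua r" and wrr = "\<lambda>r s. urr r s - uaa r" and wt = "ut"])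
      show "\<epsilon> < R" "0 < t" using eps t by auto
      show "continuous_on ({\<epsilon>..R} \<times> {0..t}) (\<lambda>p. u (fst p) (snd p) - (- \<alpha> * fst p powr (1/3)))"
        by (intro continuous_on_diff uc pc)
    next
      fix s assume s: "s \<in> {0..t}"
      show "u \<epsilon> s - (- \<alpha> * \<epsilon> powr (1/3)) \<le> 0"
      proof (cases "s = 0")
        case True then show ?thesis using ic[of \<epsilon>] u0e_bounds[of \<epsilon>] eps ustar_eq by auto
      next
        case False then show ?thesis using bc_eps[of s] s vfun_nn[of \<epsilon> s] eps ustar_eq by auto
      qed
      show "u R s - (- \<alpha> * R powr (1/3)) \<le> 0"
      proof (cases "s = 0")
        case True then show ?thesis using ic[of R] u0e_bounds[of R] eps ustar_eq by auto
      next
        case False then show ?thesis using bc_R[of s] s ustar_eq by auto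
      qed
    next
      fix x assume x: "x \<in> {\<epsilon>..R}"
      show "u x 0 - (- \<alpha> * x powr (1/3)) \<le> 0" using ic[OF x] u0e_bounds[OF x] ustar_eq by auto
    next
      fix x s assume x: "x \<in> {\<epsilon><..<R}" and s: "s \<in> {0<..t}"
      have x0: "x > 0" using x eps by simp
      show "((\<lambda>y. u y s - (- \<alpha> * y powr (1/3))) has_real_derivative ur x s - ua x) (at x)"
        using x s by (intro DERIV_diff u_r ustar_d x0) auto
      show "((\<lambda>y. ur y s - ua y) has_real_derivative urr x s - uaa x) (at x)"
        using x s by (intro DERIV_diff u_rr ua_d x0) auto
      show "((\<lambda>y. u x y - (- \<alpha> * x powr (1/3))) has_real_derivative ut x s) (at s)"
        using DERIV_diff[OF u_t[of x s] DERIV_const, of "- \<alpha> * x powr (1/3)"] x s by simp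
      show "u x s - (- \<alpha> * x powr (1/3)) > 0 \<Longrightarrow> ur x s - ua x = 0 \<Longrightarrow> urr x s - uaa x \<le> 0 \<Longrightarrow> ut x s < 0"
        using key_up[OF x] s by auto
    qed
    have lo: "\<forall>r\<in>{\<epsilon>..R}. \<forall>s\<in>{0..t}. (- \<alpha> * r powr (1/3) - \<theta> s * Vf r) - u r s \<le> 0"
    proof (rule max_principle[where wr = "\<lambda>r s. ua r - \<theta> s * V1 r - ur r s"
          and wrr = "\<lambda>r s. uaa r - \<theta> s * V2 r - urr r s" and wt = "\<lambda>r s. lam\<^sup>2 * \<theta> s * Vf r - ut r s"])
      show "\<epsilon> < R" "0 < t" using eps t by auto
      show "continuous_on ({\<epsilon>..R} \<times> {0..t}) (\<lambda>p. (- \<alpha> * fst p powr (1/3) - \<theta> (snd p) * Vf (fst p)) - u (fst p) (snd p))"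
        by (intro continuous_on_diff uc pc Vfc)
    next
      fix s assume s: "s \<in> {0..t}"
      show "(- \<alpha> * \<epsilon> powr (1/3) - \<theta> s * Vf \<epsilon>) - u \<epsilon> s \<le> 0"
      proof (cases "s = 0")
        case True then show ?thesis using ic[of \<epsilon>] u0e_eps eps ustar_eq vfun_eq[of \<epsilon> 0] \<theta>0 by auto
      next
        case False then show ?thesis using bc_eps[of s] s vfun_eq[of \<epsilon> s] eps ustar_eq by auto
      qed
      show "(- \<alpha> * R powr (1/3) - \<theta> s * Vf R) - u R s \<le> 0"
      proof (cases "s = 0")
        case True then show ?thesis using ic[of R] u0e_bounds[of R] eps ustar_eq vfun_eq[of R 0] \<theta>0 by auto
      next
        case False then show ?thesis using bc_R[of s] s ustar_eq Vf_nn[of R] \<theta>pos[of s] eps by auto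
      qed
    next
      fix x assume x: "x \<in> {\<epsilon>..R}"
      show "(- \<alpha> * x powr (1/3) - \<theta> 0 * Vf x) - u x 0 \<le> 0"
        using ic[OF x] u0e_bounds[OF x] ustar_eq vfun_eq[of x 0] \<theta>0 x eps by auto
    next
      fix x s assume x: "x \<in> {\<epsilon><..<R}" and s: "s \<in> {0<..t}"
      have x0: "x > 0" using x eps by simp
      show "((\<lambda>y. (- \<alpha> * y powr (1/3) - \<theta> s * Vf y) - u y s) has_real_derivative ua x - \<theta> s * V1 x - ur x s) (at x)"
        using x s by (intro DERIV_diff DERIV_cmult u_r ustar_d Vf_d x0) auto
      show "((\<lambda>y. ua y - \<theta> s * V1 y - ur y s) has_real_derivative uaa x - \<theta> s * V2 x - urr x s) (at x)"
        using x s by (intro DERIV_diff DERIV_cmult u_rr ua_d V1_d x0) auto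
      have "((\<lambda>y. (- \<alpha> * x powr (1/3) - \<theta> y * Vf x) - u x y) has_real_derivative
            (0 - (- (lam\<^sup>2) * \<theta> s) * Vf x) - ut x s) (at s)"
        using x s by (intro DERIV_diff DERIV_const DERIV_cmult_right \<theta>_d u_t) auto
      then show "((\<lambda>y. (- \<alpha> * x powr (1/3) - \<theta> y * Vf x) - u x y) has_real_derivative
            lam\<^sup>2 * \<theta> s * Vf x - ut x s) (at s)"
        by (rule DERIV_cong) simp
      show "(- \<alpha> * x powr (1/3) - \<theta> s * Vf x) - u x s > 0 \<Longrightarrow> ua x - \<theta> s * V1 x - ur x s = 0
          \<Longrightarrow> uaa x - \<theta> s * V2 x - urr x s \<le> 0 \<Longrightarrow> lam\<^sup>2 * \<theta> s * Vf x - ut x s < 0"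
        using key_lo[OF x] s by auto
    qed
    have rr: "r \<in> {\<epsilon>..R}" and tt: "t \<in> {0..t}" using r t by auto
    have "u r t \<le> ustar n r" using up[rule_format, OF rr tt] ustar_eq[of r] by simp
    moreover have "ustar n r - vfun n Cv lam r t \<le> u r t"
      using lo[rule_format, OF rr tt] ustar_eq[of r] vfun_eq[OF r0, of t] by simp
    ultimately show "ustar n r \<ge> u r t \<and> u r t \<ge> ustar n r - vfun n Cv lam r t" by simp
  qed
qed

end
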